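(* Let $w$ be a weight on $(0,\infty)$, $W(t)=\int_0^tw(s)\,ds$, and $\overline W(t)=\sup_{s>0}\frac{W(st)}{W(s)}$. The following are equivalent: (i) $w\in B^*_\infty$; (ii) there exists $\lambda\in(0,1)$ with $\overline W(\lambda)<1$; (iii) there is $C>0$ such that $\frac{W(t)}{W(s)}\le C(1+\log(s/t))^{-1}$ for all $0<t\le s$; (iv) for every $p>0$ there is $C_p>0$ such that $\frac{W(t)}{W(s)}\le C_p(1+\log(s/t))^{-p}$ for all $0<t\le s$; (v) $\overline W(0^+)=0$; (vi) for every $\varepsilon>0$ there exists $\delta>0$ such that $W(t)\le\varepsilon W(s)$ whenever $t\le\delta s$.
   Context: A weight $w$ on $(0,\infty)$ is a positive locally integrable function. $w\in B^*_\infty$ means: there is $C>0$ with $\int_0^r\frac1t\int_0^tw(s)\,ds\,dt\le C\int_0^rw(s)\,ds$ for all $r>0$. *)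

theory Defs
  imports "HOL-Analysis.Analysis"
begin

definition weight :: "(real \<Rightarrow> real) \<Rightarrow> bool" where
  "weight w \<longleftrightarrow> (\<forall>s>0. w s > 0) \<and> (\<forall>r>0. w integrable_on {0..r})"

definition Wfun :: "(real \<Rightarrow> real) \<Rightarrow> real \<Rightarrow> real" where
  "Wfun w t = integral {0..t} w"

text \<open>Wbar(t) = sup over s>0 of W(st)/W(s) (only used for 0 < t < 1, where it is bounded by 1).\<close>
definition Wbar :: "(real \<Rightarrow> real) \<Rightarrow> real \<Rightarrow> real" where
  "Wbar w t = (SUP s\<in>{0<..}. Wfun w (s * t) / Wfun w s)"

text \<open>B*_infinity, with the left-hand integral taken as a (possibly infinite) nonnegative integral.\<close>
definition B_star_infty :: "(real \<Rightarrow> real) \<Rightarrow> bool" where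
  "B_star_infty w \<longleftrightarrow> (\<exists>C>0. \<forall>r>0.
     (\<integral>\<^sup>+ t. ennreal (Wfun w t / t) * indicator {0<..r} t \<partial>lborel) \<le> ennreal (C * Wfun w r))"

end

theory Submission
  imports Defs
begin

lemma int_pos:
  fixes f :: "real \<Rightarrow> real"
  assumes f: "f integrable_on {a..b}" and ab: "a < b" and pos: "\<And>x. x \<in> {a..b} \<Longrightarrow> f x > 0"
  shows "integral {a..b} f > 0"
proof -
  have ai: "f absolutely_integrable_on {a..b}"
    using nonnegative_absolutely_integrable_1[OF f] pos by (meson less_imp_le)
  then have si: "set_integrable lebesgue {a..b} f" by simp
  have eq: "(LINT x:{a..b} | lebesgue. f x) = integral {a..b} f"
    using set_lebesgue_integral_eq_integral[OF si] by simp
  have nn: "integral {a..b} f \<ge> 0" using integral_nonneg[OF f] pos by (meson less_imp_le)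
  show ?thesis
  proof (rule ccontr)
    assume "\<not> ?thesis"
    then have z: "integral {a..b} f = 0" using nn by linarith
    have "integral\<^sup>L lebesgue (\<lambda>x. indicator {a..b} x *\<^sub>R f x) = 0"
      using eq z by (simp add: set_lebesgue_integral_def)
    moreover have "integrable lebesgue (\<lambda>x. indicator {a..b} x *\<^sub>R f x)"
      using si by (simp add: set_integrable_def)
    moreover have "AE x in lebesgue. 0 \<le> indicator {a..b} x *\<^sub>R f x"
      using pos by (auto simp: indicator_def less_imp_le)
    ultimately have "AE x in lebesgue. indicator {a..b} x *\<^sub>R f x = 0"
      using integral_nonneg_eq_0_iff_AE by blast
    then obtain N where N: "{x \<in> space lebesgue. \<not> indicator {a..b} x *\<^sub>R f x = 0} \<subseteq> N"
      "emeasure lebesgue N = 0" "N \<in> sets lebesgue"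
      by (auto elim!: AE_E)
    have "{a..b} \<subseteq> N" using N(1) pos by (force simp: indicator_def)
    then have "emeasure lebesgue {a..b} \<le> emeasure lebesgue N"
      using N(3) by (intro emeasure_mono) auto
    then show False using N(2) ab by simp
  qed
qed

definition gw :: "(real \<Rightarrow> real) \<Rightarrow> real \<Rightarrow> real" where
  "gw w x = (if x = 0 then 1 else w x)"

lemma g_facts:
  assumes "weight w"
  shows "\<And>t. Wfun w t = integral {0..t} (gw w)" "\<And>r. gw w integrable_on {0..r}" "\<And>x. x \<ge> 0 \<Longrightarrow> gw w x > 0"
proof -
  show "Wfun w t = integral {0..t} (gw w)" for t
    unfolding Wfun_def gw_def by (rule integral_spike[where S="{0}"]) auto
  show "gw w integrable_on {0..r}" for r
  proof (cases "r > 0")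
    case True
    then have "w integrable_on {0..r}" using assms(1) unfolding weight_def by auto
    then show ?thesis unfolding gw_def by (rule integrable_spike[where S="{0}"]) auto
  next
    case False
    have c: "gw w integrable_on cbox 0 0" by (rule integrable_on_refl)
    have "{0..r} = {} \<or> {0..r} = cbox 0 0" using False by auto
    then show ?thesis using c by auto
  qed
  show "x \<ge> 0 \<Longrightarrow> gw w x > 0" for x using assms(1) unfolding gw_def weight_def by auto
qed

lemma W_nonneg: assumes "weight w" shows "Wfun w t \<ge> 0"
proof -
  note G = g_facts[OF assms]
  show ?thesis unfolding G(1) by (rule integral_nonneg[OF G(2)]) (use G(3) in \<open>auto intro: less_imp_le\<close>)
qed

lemma W_pos: assumes "weight w" "t > 0" shows "Wfun w t > 0"
proof -
  note G = g_facts[OF assms(1)]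
  show ?thesis unfolding G(1) by (rule int_pos[OF G(2)]) (use G(3) assms(2) in auto)
qed

lemma W_mono: assumes "weight w" "0 \<le> t" "t \<le> s" shows "Wfun w t \<le> Wfun w s"
proof -
  note G = g_facts[OF assms(1)]
  have "integral {0..t} (gw w) + integral {t..s} (gw w) = integral {0..s} (gw w)"
    using Henstock_Kurzweil_Integration.integral_combine[where a=0 and c=t and b=s and f="gw w"] assms G(2) by auto
  moreover have "integral {t..s} (gw w) \<ge> 0"
    by (rule integral_nonneg[OF integrable_on_subinterval[OF G(2)[of s]]]) (use assms G(3) in \<open>auto intro: less_imp_le\<close>)
  ultimately show ?thesis unfolding G(1) by linarith
qed

lemma Wbar_le:
  assumes "\<And>s. s > 0 \<Longrightarrow> Wfun w (s * x) / Wfun w s \<le> c"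
  shows "Wbar w x \<le> c"
  unfolding Wbar_def by (rule cSUP_least) (use assms in auto)

lemma Wbar_ge:
  assumes "weight w" "0 < x" "x \<le> 1" "s > 0"
  shows "Wfun w (s * x) / Wfun w s \<le> Wbar w x"
  unfolding Wbar_def
proof (rule cSUP_upper)
  show "s \<in> {0<..}" using assms by auto
  have "Wfun w (s * x) / Wfun w s \<le> 1" if "s > 0" for s
  proof -
    have "Wfun w (s * x) \<le> Wfun w s" using W_mono[OF assms(1), of "s*x" s] assms that
      by (simp add: mult_left_le)
    then show ?thesis using W_pos[OF assms(1) that] by simp
  qed
  then show "bdd_above ((\<lambda>s. Wfun w (s * x) / Wfun w s) ` {0<..})"
    by (intro bdd_aboveI2[of _ _ 1]) auto
qed

lemma B_imp_log:
  assumes w: "weight w" and B: "B_star_infty w"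
  shows "\<exists>C>0. \<forall>t s. 0 < t \<and> t \<le> s \<longrightarrow> Wfun w t * ln (s / t) \<le> C * Wfun w s"
proof -
  obtain C where C: "C > 0" and CB: "\<And>r. r > 0 \<Longrightarrow>
     (\<integral>\<^sup>+ t. ennreal (Wfun w t / t) * indicator {0<..r} t \<partial>lborel) \<le> ennreal (C * Wfun w r)"
    using B unfolding B_star_infty_def by blast
  have "Wfun w t * ln (s / t) \<le> C * Wfun w s" if ts: "0 < t" "t \<le> s" for t s
  proof (cases "t = s")
    case True
    then show ?thesis using W_nonneg[OF w, of s] C ts by simp
  next
    case False
    then have tls: "t < s" using ts by simp
    have hi: "((\<lambda>x. Wfun w t / x) has_integral (Wfun w t * ln s - Wfun w t * ln t)) {t..s}"
    proof (rule fundamental_theorem_of_calculus)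
      show "t \<le> s" using tls by simp
      fix x assume "x \<in> {t..s}"
        then have "x > 0" using ts by auto
        then have "((\<lambda>x. Wfun w t * ln x) has_real_derivative Wfun w t * (1 / x)) (at x within {t..s})"
          by (auto intro!: derivative_eq_intros)
        then show "((\<lambda>x. Wfun w t * ln x) has_vector_derivative Wfun w t / x) (at x within {t..s})"
          by (simp add: has_real_derivative_iff_has_vector_derivative)
    qed
    have nn: "(\<integral>\<^sup>+ x. ennreal (indicator {t..s} x * (Wfun w t / x)) \<partial>lborel) = ennreal (Wfun w t * ln s - Wfun w t * ln t)"
      by (rule nn_integral_has_integral_lebesgue[OF _ hi]) (use ts W_nonneg[OF w] in auto)
    have "(\<integral>\<^sup>+ x. ennreal (indicator {t..s} x * (Wfun w t / x)) \<partial>lborel)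
        \<le> (\<integral>\<^sup>+ x. ennreal (Wfun w x / x) * indicator {0<..s} x \<partial>lborel)"
    proof (rule nn_integral_mono)
      fix x
      show "ennreal (indicator {t..s} x * (Wfun w t / x)) \<le> ennreal (Wfun w x / x) * indicator {0<..s} x"
      proof (cases "x \<in> {t..s}")
        case True
        then have "x > 0" using ts by auto
        moreover have "Wfun w t \<le> Wfun w x" using W_mono[OF w, of t x] True ts by auto
        ultimately have "Wfun w t / x \<le> Wfun w x / x" by (simp add: divide_right_mono)
        then show ?thesis using True \<open>x > 0\<close> by (simp add: ennreal_leI)
      next
        case False
        then show ?thesis by simp
      qed
    qed
    also have "\<dots> \<le> ennreal (C * Wfun w s)" using CB ts by auto
    finally have "ennreal (Wfun w t * ln s - Wfun w t * ln t) \<le> ennreal (C * Wfun w s)" using nn by simp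
    then have "Wfun w t * ln s - Wfun w t * ln t \<le> C * Wfun w s"
      using C W_nonneg[OF w, of s] by (simp add: ennreal_le_iff)
    then show ?thesis using ts by (simp add: ln_div right_diff_distrib)
  qed
  then show ?thesis using C by blast
qed

lemma pow_imp_B:
  assumes w: "weight w" and K: "K > 0" and g: "\<gamma> > 0"
    and P: "\<And>t s. 0 < t \<Longrightarrow> t \<le> s \<Longrightarrow> Wfun w t \<le> K * (t / s) powr \<gamma> * Wfun w s"
  shows "B_star_infty w"
  unfolding B_star_infty_def
proof (intro exI conjI allI impI)
  show "K / \<gamma> > 0" using K g by simp
  fix r :: real assume r: "r > 0"
  define c where "c = K * Wfun w r / r powr \<gamma>"
  have c0: "c \<ge> 0" unfolding c_def using K W_nonneg[OF w, of r] by simp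
  have hi: "((\<lambda>x. c * x powr (\<gamma> - 1)) has_integral (c * (r powr (\<gamma> - 1 + 1) / (\<gamma> - 1 + 1)))) {0..r}"
    by (rule has_integral_mult_right, rule has_integral_powr_from_0) (use g r in auto)
  have eqI: "c * (r powr (\<gamma> - 1 + 1) / (\<gamma> - 1 + 1)) = K / \<gamma> * Wfun w r"
    unfolding c_def using r g by simp
  have nn: "(\<integral>\<^sup>+ x. ennreal (indicator {0..r} x * (c * x powr (\<gamma> - 1))) \<partial>lborel) = ennreal (K / \<gamma> * Wfun w r)"
    by (rule nn_integral_has_integral_lebesgue[OF _ hi[unfolded eqI]]) (use c0 in auto)
  have "(\<integral>\<^sup>+ x. ennreal (Wfun w x / x) * indicator {0<..r} x \<partial>lborel)
      \<le> (\<integral>\<^sup>+ x. ennreal (indicator {0..r} x * (c * x powr (\<gamma> - 1))) \<partial>lborel)"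
  proof (rule nn_integral_mono)
    fix x
    show "ennreal (Wfun w x / x) * indicator {0<..r} x \<le> ennreal (indicator {0..r} x * (c * x powr (\<gamma> - 1)))"
    proof (cases "x \<in> {0<..r}")
      case True
      then have x: "x > 0" "x \<le> r" by auto
      have "Wfun w x / x \<le> K * (x / r) powr \<gamma> * Wfun w r / x"
        using P[OF x] x by (simp add: divide_right_mono)
      also have "\<dots> = c * x powr (\<gamma> - 1)"
        unfolding c_def using x r by (simp add: powr_divide powr_diff field_simps)
      finally show ?thesis using True by (simp add: ennreal_leI)
    next
      case False
      then show ?thesis by simp
    qed
  qed
  then show "(\<integral>\<^sup>+ x. ennreal (Wfun w x / x) * indicator {0<..r} x \<partial>lborel) \<le> ennreal (K / \<gamma> * Wfun w r)"
    using nn by simp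
qed

lemma Wbar_imp_pow:
  assumes w: "weight w" and lam: "0 < lam" "lam < 1" and Wb: "Wbar w lam < 1"
  shows "\<exists>K>0. \<exists>\<gamma>>0. \<forall>t s. 0 < t \<and> t \<le> s \<longrightarrow> Wfun w t \<le> K * (t / s) powr \<gamma> * Wfun w s"
proof -
  define b where "b = max (Wbar w lam) (1/2)"
  have b: "1/2 \<le> b" "b < 1" unfolding b_def using Wb by auto
  have step: "Wfun w (s * lam) \<le> b * Wfun w s" if "s > 0" for s
  proof -
    have "Wfun w (s * lam) / Wfun w s \<le> b"
      using Wbar_ge[OF w lam(1) _ that] lam unfolding b_def by force
    then show ?thesis using W_pos[OF w that] by (simp add: divide_le_eq)
  qed
  have iter: "Wfun w (lam ^ n * s) \<le> b ^ n * Wfun w s" if "s > 0" for n s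
  proof (induction n)
    case 0 then show ?case by simp
  next
    case (Suc n)
    have "Wfun w (lam ^ Suc n * s) = Wfun w ((lam ^ n * s) * lam)" by (simp add: algebra_simps)
    also have "\<dots> \<le> b * Wfun w (lam ^ n * s)" by (rule step) (use lam that in simp)
    also have "\<dots> \<le> b * (b ^ n * Wfun w s)" using Suc b by (intro mult_left_mono) auto
    finally show ?case by simp
  qed
  define \<gamma> where "\<gamma> = ln b / ln lam"
  have lnl: "ln lam < 0" using lam by simp
  have lnb: "ln b < 0" using b by simp
  have g: "\<gamma> > 0" unfolding \<gamma>_def using lnl lnb by (simp add: divide_neg_neg)
  have "Wfun w t \<le> (1 / b) * (t / s) powr \<gamma> * Wfun w s" if ts: "0 < t" "t \<le> s" for t s
  proof -
    define L where "L = ln (s / t)"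
    have L0: "L \<ge> 0" unfolding L_def using ts by simp
    define x where "x = L / (- ln lam)"
    have x0: "x \<ge> 0" unfolding x_def using L0 lnl by (simp add: divide_nonneg_neg)
    define n where "n = nat \<lfloor>x\<rfloor>"
    have n1: "real n \<le> x" and n2: "x < real n + 1" unfolding n_def using x0
      by (simp_all add: of_nat_nat)
    have "t / s = exp (- L)" unfolding L_def using ts by (simp add: ln_div exp_diff)
    also have "- L = x * ln lam" unfolding x_def using lnl by simp
    also have "exp (x * ln lam) \<le> exp (real n * ln lam)"
      using n1 lnl by (simp add: mult_right_mono_neg)
    also have "exp (real n * ln lam) = lam ^ n" using lam by (simp add: exp_of_nat_mult)
    finally have "t / s \<le> lam ^ n" .
    then have "t \<le> lam ^ n * s" using ts by (simp add: divide_le_eq)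
    then have "Wfun w t \<le> Wfun w (lam ^ n * s)" using W_mono[OF w] ts by simp
    also have "\<dots> \<le> b ^ n * Wfun w s" using iter ts by simp
    also have "b ^ n = exp (real n * ln b)" using b by (simp add: exp_of_nat_mult)
    also have "exp (real n * ln b) \<le> exp ((x - 1) * ln b)"
      using n2 lnb by (simp add: mult_right_mono_neg)
    also have "exp ((x - 1) * ln b) = (1 / b) * exp (- \<gamma> * L)"
    proof -
      have "(x - 1) * ln b = - \<gamma> * L - ln b"
        unfolding x_def \<gamma>_def using lnl by (simp add: field_simps)
      then show ?thesis using b by (simp add: exp_diff)
    qed
    also have "exp (- \<gamma> * L) = (t / s) powr \<gamma>"
      unfolding L_def using ts by (simp add: powr_def ln_div algebra_simps)
    finally show ?thesis using W_nonneg[OF w, of s] by (simp add: mult_right_mono)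
  qed
  moreover have "1 / b > 0" using b by simp
  ultimately show ?thesis using g by blast
qed

lemma pow_imp_iv:
  assumes w: "weight w" and K: "K > 0" and g: "\<gamma> > 0"
    and P: "\<And>t s. 0 < t \<Longrightarrow> t \<le> s \<Longrightarrow> Wfun w t \<le> K * (t / s) powr \<gamma> * Wfun w s"
    and p: "p > 0"
  shows "\<exists>C>0. \<forall>t s. 0 < t \<and> t \<le> s \<longrightarrow> Wfun w t / Wfun w s \<le> C * (1 + ln (s / t)) powr (-p)"
proof -
  define q where "q = \<gamma> / p"
  define m where "m = min 1 q"
  have q: "q > 0" unfolding q_def using g p by simp
  have m: "m > 0" "m \<le> 1" "m \<le> q" unfolding m_def using q by auto
  have "Wfun w t / Wfun w s \<le> (K * m powr (-p)) * (1 + ln (s / t)) powr (-p)" if ts: "0 < t" "t \<le> s" for t s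
  proof -
    define L where "L = ln (s / t)"
    have L0: "L \<ge> 0" unfolding L_def using ts by simp
    have s0: "Wfun w s > 0" using W_pos[OF w] ts by simp
    have "Wfun w t / Wfun w s \<le> K * (t / s) powr \<gamma>"
      using P[OF ts] s0 by (simp add: divide_le_eq)
    also have "(t / s) powr \<gamma> = exp (- (\<gamma> * L))"
      unfolding L_def using ts by (simp add: powr_def ln_div algebra_simps)
    also have "exp (- (\<gamma> * L)) \<le> m powr (-p) * (1 + L) powr (-p)"
    proof -
      have "m * (1 + L) \<le> 1 + q * L" using m L0 using mult_left_mono[OF m(3) L0] by (simp add: algebra_simps)
      also have "\<dots> \<le> exp (q * L)" by (rule exp_ge_add_one_self)
      finally have "m * (1 + L) \<le> exp (q * L)" .
      then have "(m * (1 + L)) powr p \<le> exp (q * L) powr p"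
        using m L0 p by (intro powr_mono2) auto
      also have "exp (q * L) powr p = exp (\<gamma> * L)"
        unfolding q_def using p by (simp add: powr_def)
      finally have A: "m powr p * (1 + L) powr p \<le> exp (\<gamma> * L)"
        using m L0 by (simp add: powr_mult)
      have pos: "m powr p * (1 + L) powr p > 0" using m L0 by simp
      have "exp (- (\<gamma> * L)) = inverse (exp (\<gamma> * L))" by (simp add: exp_minus)
      also have "\<dots> \<le> inverse (m powr p * (1 + L) powr p)"
        using A pos by (rule le_imp_inverse_le)
      also have "\<dots> = m powr (-p) * (1 + L) powr (-p)"
        by (simp add: powr_minus)
      finally show ?thesis .
    qed
    finally show ?thesis using K unfolding L_def by (simp add: mult_left_mono mult.assoc)
  qed
  moreover have "K * m powr (-p) > 0" using K m by simp
  ultimately show ?thesis by blast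
qed

lemma lim_aux: "((\<lambda>x::real. C / (- ln x)) \<longlongrightarrow> 0) (at_right 0)"
proof -
  have "filterlim (\<lambda>x::real. - ln x) at_top (at_right 0)"
    using ln_at_0 by (simp add: filterlim_uminus_at_top)
  then have "filterlim (\<lambda>x::real. - ln x) at_infinity (at_right 0)"
    using filterlim_at_top_imp_at_infinity by blast
  then show ?thesis by (rule tendsto_divide_0[OF tendsto_const])
qed

theorem proposition2p3:
  fixes w :: "real \<Rightarrow> real"
  assumes "weight w"
  defines "W \<equiv> Wfun w"
  shows "(B_star_infty w \<longleftrightarrow> (\<exists>lam\<in>{0<..<1}. Wbar w lam < 1))
       \<and> (B_star_infty w \<longleftrightarrow> (\<exists>C>0. \<forall>t s. 0 < t \<and> t \<le> s \<longrightarrow>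
              W t / W s \<le> C * (1 + ln (s / t)) powr (-1)))
       \<and> (B_star_infty w \<longleftrightarrow> (\<forall>p>0. \<exists>C>0. \<forall>t s. 0 < t \<and> t \<le> s \<longrightarrow>
              W t / W s \<le> C * (1 + ln (s / t)) powr (-p)))
       \<and> (B_star_infty w \<longleftrightarrow> (Wbar w \<longlongrightarrow> 0) (at_right 0))
       \<and> (B_star_infty w \<longleftrightarrow> (\<forall>\<epsilon>>0. \<exists>\<delta>>0. \<forall>t s. 0 < t \<and> 0 < s \<and> t \<le> \<delta> * s \<longrightarrow>
              W t \<le> \<epsilon> * W s))"
proof -
  note w = assms(1)
  let ?B = "B_star_infty w"
  let ?ii = "\<exists>lam\<in>{0<..<1}. Wbar w lam < 1"
  let ?iii = "\<exists>C>0. \<forall>t s. 0 < t \<and> t \<le> s \<longrightarrow>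
              Wfun w t / Wfun w s \<le> C * (1 + ln (s / t)) powr (-1)"
  let ?iv = "\<forall>p>0. \<exists>C>0. \<forall>t s. 0 < t \<and> t \<le> s \<longrightarrow>
              Wfun w t / Wfun w s \<le> C * (1 + ln (s / t)) powr (-p)"
  let ?v = "(Wbar w \<longlongrightarrow> 0) (at_right 0)"
  let ?vi = "\<forall>\<epsilon>>0. \<exists>\<delta>>0. \<forall>t s. 0 < t \<and> 0 < s \<and> t \<le> \<delta> * s \<longrightarrow>
              Wfun w t \<le> \<epsilon> * Wfun w s"
  have ii_B: "?ii \<Longrightarrow> ?B"
  proof -
    assume ?ii
    then obtain lam where l: "0 < lam" "lam < 1" "Wbar w lam < 1" by auto
    obtain K \<gamma> where K: "K > 0" and g: "\<gamma> > 0"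
      and P0: "\<forall>t s. 0 < t \<and> t \<le> s \<longrightarrow> Wfun w t \<le> K * (t / s) powr \<gamma> * Wfun w s"
      using Wbar_imp_pow[OF w l] by auto
    have P: "\<And>t s. 0 < t \<Longrightarrow> t \<le> s \<Longrightarrow> Wfun w t \<le> K * (t / s) powr \<gamma> * Wfun w s"
      using P0 by simp
    show ?B by (rule pow_imp_B[OF w K g P])
  qed
  have vi_ii: "?vi \<Longrightarrow> ?ii"
  proof -
    assume vi: ?vi
    have "(1/2::real) > 0" by simp
    with vi obtain \<delta> where d: "\<delta> > 0" "\<forall>t s. 0 < t \<and> 0 < s \<and> t \<le> \<delta> * s \<longrightarrow> Wfun w t \<le> 1/2 * Wfun w s"
      by blast
    define lam where "lam = min \<delta> (1/2)"
    have lam: "0 < lam" "lam < 1" "lam \<le> \<delta>" unfolding lam_def using d by auto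
    have "Wbar w lam \<le> 1/2"
    proof (rule Wbar_le)
      fix s :: real assume s: "s > 0"
      have "s * lam \<le> \<delta> * s" using s lam by (simp add: mult.commute mult_left_mono)
      moreover have "s * lam > 0" using s lam by simp
      ultimately have "Wfun w (s * lam) \<le> 1/2 * Wfun w s"
        using d(2) s by blast
      then show "Wfun w (s * lam) / Wfun w s \<le> 1/2" using W_pos[OF w s] by (simp add: divide_le_eq)
    qed
    then show ?ii using lam by force
  qed
  have B_vi: "?B \<Longrightarrow> ?vi"
  proof -
    assume ?B
    then obtain C where C: "C > 0" "\<forall>t s. 0 < t \<and> t \<le> s \<longrightarrow> Wfun w t * ln (s / t) \<le> C * Wfun w s"
      using B_imp_log[OF w] by blast
    show ?vi
    proof (intro allI impI)
      fix \<epsilon> :: real assume e: "\<epsilon> > 0"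
      define \<delta> where "\<delta> = exp (- (C / \<epsilon>))"
      have d: "\<delta> > 0" "\<delta> < 1" unfolding \<delta>_def using C e by auto
      have "Wfun w t \<le> \<epsilon> * Wfun w s" if ts: "0 < t" "0 < s" "t \<le> \<delta> * s" for t s
      proof -
        have tls: "t \<le> s"
        proof -
          have "\<delta> * s \<le> 1 * s" by (rule mult_right_mono) (use d ts in auto)
          then show ?thesis using ts by linarith
        qed
        have "1 / \<delta> \<le> s / t" using ts d by (simp add: field_simps)
        then have "ln (1 / \<delta>) \<le> ln (s / t)" using ln_le_cancel_iff[of "1/\<delta>" "s/t"] d ts by simp
        then have L: "C / \<epsilon> \<le> ln (s / t)" unfolding \<delta>_def by (simp add: ln_div)
        have "Wfun w t * (C / \<epsilon>) \<le> Wfun w t * ln (s / t)"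
          using mult_left_mono[OF L W_nonneg[OF w, of t]] by simp
        also have "\<dots> \<le> C * Wfun w s" using C(2) ts tls by blast
        finally have "Wfun w t * C \<le> \<epsilon> * (C * Wfun w s)" using e by (simp add: field_simps)
        then show ?thesis using C(1) by (simp add: algebra_simps)
      qed
      then show "\<exists>\<delta>>0. \<forall>t s. 0 < t \<and> 0 < s \<and> t \<le> \<delta> * s \<longrightarrow> Wfun w t \<le> \<epsilon> * Wfun w s"
        using d by blast
    qed
  qed
  have B_ii: "?B \<Longrightarrow> ?ii" using B_vi vi_ii by blast
  have B_iii: "?B \<Longrightarrow> ?iii"
  proof -
    assume ?B
    then obtain C where C: "C > 0" "\<forall>t s. 0 < t \<and> t \<le> s \<longrightarrow> Wfun w t * ln (s / t) \<le> C * Wfun w s"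
      using B_imp_log[OF w] by blast
    have "Wfun w t / Wfun w s \<le> (1 + C) * (1 + ln (s / t)) powr (-1)" if ts: "0 < t" "t \<le> s" for t s
    proof -
      have L0: "ln (s / t) \<ge> 0" using ts by simp
      have "Wfun w t \<le> Wfun w s" using W_mono[OF w] ts by simp
      moreover have "Wfun w t * ln (s / t) \<le> C * Wfun w s" using C ts by blast
      ultimately have "Wfun w t * (1 + ln (s / t)) \<le> (1 + C) * Wfun w s" by (simp add: algebra_simps)
      moreover have p1: "1 + ln (s / t) > 0" using L0 by simp
      ultimately have "Wfun w t \<le> (1 + C) * Wfun w s / (1 + ln (s / t))"
        by (subst pos_le_divide_eq) auto
      then have "Wfun w t / Wfun w s \<le> (1 + C) / (1 + ln (s / t))"
        using W_pos[OF w, of s] ts by (subst pos_divide_le_eq) auto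
      then show ?thesis using p1 by (simp add: powr_neg_one)
    qed
    moreover have "1 + C > 0" using C(1) by simp
    ultimately show ?iii by blast
  qed
  have iii_vi: "?iii \<Longrightarrow> ?vi"
  proof -
    assume ?iii
    then obtain C where C: "C > 0" "\<forall>t s. 0 < t \<and> t \<le> s \<longrightarrow>
              Wfun w t / Wfun w s \<le> C * (1 + ln (s / t)) powr (-1)" by blast
    show ?vi
    proof (intro allI impI)
      fix \<epsilon> :: real assume e: "\<epsilon> > 0"
      define \<delta> where "\<delta> = exp (- (C / \<epsilon>))"
      have d: "\<delta> > 0" "\<delta> < 1" unfolding \<delta>_def using C e by auto
      have "Wfun w t \<le> \<epsilon> * Wfun w s" if ts: "0 < t" "0 < s" "t \<le> \<delta> * s" for t s
      proof -
        have tls: "t \<le> s"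
        proof -
          have "\<delta> * s \<le> 1 * s" by (rule mult_right_mono) (use d ts in auto)
          then show ?thesis using ts by linarith
        qed
        have "1 / \<delta> \<le> s / t" using ts d by (simp add: field_simps)
        then have "ln (1 / \<delta>) \<le> ln (s / t)" using ln_le_cancel_iff[of "1/\<delta>" "s/t"] d ts by simp
        then have L: "C / \<epsilon> \<le> ln (s / t)" unfolding \<delta>_def by (simp add: ln_div)
        have L0: "ln (s / t) \<ge> 0" using ts tls by simp
        have "Wfun w t / Wfun w s \<le> C / (1 + ln (s / t))"
          using C(2) ts tls L0 by (simp add: powr_neg_one)
        also have "\<dots> \<le> \<epsilon>"
        proof -
          have "C \<le> \<epsilon> * ln (s / t)" using L e by (simp add: field_simps)
          then have "C \<le> \<epsilon> * (1 + ln (s / t))" using e by (simp add: algebra_simps)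
          then show ?thesis using L0 by (simp add: divide_le_eq)
        qed
        finally show ?thesis using W_pos[OF w ts(2)] by (simp add: divide_le_eq)
      qed
      then show "\<exists>\<delta>>0. \<forall>t s. 0 < t \<and> 0 < s \<and> t \<le> \<delta> * s \<longrightarrow> Wfun w t \<le> \<epsilon> * Wfun w s"
        using d by blast
    qed
  qed
  have B_iv: "?B \<Longrightarrow> ?iv"
  proof -
    assume ?B
    then have ?ii by (rule B_ii)
    then obtain lam where l: "0 < lam" "lam < 1" "Wbar w lam < 1" by auto
    obtain K \<gamma> where K: "K > 0" and g: "\<gamma> > 0"
      and P0: "\<forall>t s. 0 < t \<and> t \<le> s \<longrightarrow> Wfun w t \<le> K * (t / s) powr \<gamma> * Wfun w s"
      using Wbar_imp_pow[OF w l] by auto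
    have P: "\<And>t s. 0 < t \<Longrightarrow> t \<le> s \<Longrightarrow> Wfun w t \<le> K * (t / s) powr \<gamma> * Wfun w s"
      using P0 by simp
    show ?iv by (intro allI impI) (rule pow_imp_iv[OF w K g P])
  qed
  have iv_iii: "?iv \<Longrightarrow> ?iii"
  proof -
    assume ?iv
    then show ?iii by (rule allE[of _ 1]) simp
  qed
  have B_v: "?B \<Longrightarrow> ?v"
  proof -
    assume ?B
    then obtain C where C: "C > 0" "\<forall>t s. 0 < t \<and> t \<le> s \<longrightarrow> Wfun w t * ln (s / t) \<le> C * Wfun w s"
      using B_imp_log[OF w] by blast
    have ev: "eventually (\<lambda>x. 0 < x \<and> x < 1) (at_right (0::real))"
      unfolding eventually_at_right_field by (intro exI[of _ 1]) auto
    have up: "Wbar w x \<le> C / (- ln x)" if x: "0 < x" "x < 1" for x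
    proof (rule Wbar_le)
      fix s :: real assume s: "s > 0"
      have sx: "0 < s * x" "s * x \<le> s" using s x by (auto simp: mult_left_le)
      have "Wfun w (s * x) * ln (s / (s * x)) \<le> C * Wfun w s"
        using C(2) sx by blast
      moreover have "ln (s / (s * x)) = - ln x" using s x by (simp add: ln_div)
      ultimately have "Wfun w (s * x) * (- ln x) \<le> C * Wfun w s" by simp
      moreover have "- ln x > 0" using x by simp
      ultimately show "Wfun w (s * x) / Wfun w s \<le> C / (- ln x)"
        using W_pos[OF w s] by (simp add: field_simps)
    qed
    have lo: "0 \<le> Wbar w x" if x: "0 < x" "x < 1" for x
    proof -
      have "Wfun w (1 * x) / Wfun w 1 \<le> Wbar w x" using Wbar_ge[OF w x(1) _ zero_less_one] x by simp
      moreover have "0 \<le> Wfun w (1 * x) / Wfun w 1" using W_nonneg[OF w] by simp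
      ultimately show ?thesis by linarith
    qed
    show ?v
    proof (rule tendsto_sandwich[OF _ _ tendsto_const lim_aux[of C]])
      show "eventually (\<lambda>x. 0 \<le> Wbar w x) (at_right 0)" using ev lo by (auto elim: eventually_mono)
      show "eventually (\<lambda>x. Wbar w x \<le> C / (- ln x)) (at_right 0)" using ev up by (auto elim: eventually_mono)
    qed
  qed
  have v_ii: "?v \<Longrightarrow> ?ii"
  proof -
    assume v: ?v
    have e1: "eventually (\<lambda>x. Wbar w x < 1/2) (at_right 0)"
      using order_tendstoD(2)[OF v, of "1/2"] by simp
    have ev: "eventually (\<lambda>x. 0 < x \<and> x < 1) (at_right (0::real))"
      unfolding eventually_at_right_field by (intro exI[of _ 1]) auto
    have "eventually (\<lambda>x. Wbar w x < 1/2 \<and> 0 < x \<and> x < 1) (at_right (0::real))"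
      using eventually_conj[OF e1 ev] by simp
    then obtain x where "Wbar w x < 1/2" "0 < x" "x < 1"
      using eventually_happens'[OF trivial_limit_at_right_real] by blast
    then show ?ii by force
  qed
  have e1: "?B = ?ii" using ii_B B_ii by blast
  have e2: "?B = ?iii" using B_iii iii_vi vi_ii ii_B by blast
  have e3: "?B = ?iv" using B_iv iv_iii iii_vi vi_ii ii_B by blast
  have e4: "?B = ?v" using B_v v_ii ii_B by blast
  have e5: "?B = ?vi" using B_vi vi_ii ii_B by blast
  show ?thesis unfolding W_def using e1 e2 e3 e4 e5 by (intro conjI)
qed

end
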